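(* Let $\Phi=(V,C)$ be a CNF formula in which every clause contains at least $k_1$ and at most $k_2$ variables, and every variable belongs to at most $d$ clauses. Let $s\ge k_2$. If $2^{k_1}\ge 2\mathrm{e}ds$, then $\Phi$ has a satisfying assignment, and for every $v\in V$, $$\max\left\{\Pr_{X\sim\mu}[X(v)=0],\ \Pr_{X\sim\mu}[X(v)=1]\right\}\le \frac12\exp\left(\frac1s\right),$$ where $\mu$ is the uniform distribution over all satisfying assignments of $\Phi$.
   Context: A CNF formula $\Phi=(V,C)$ has a set $V$ of Boolean variables and a set $C$ of clauses; each clause is a disjunction of literals on distinct variables (no clause contains both $x$ and $\neg x$). The number of variables of a clause $c$ is $|\mathsf{vbl}(c)|$, where $\mathsf{vbl}(c)$ is the set of variables appearing in $c$. *)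

theory Defs
  imports "HOL-Probability.Probability"
begin

text \<open>A literal is a pair (x, b): the literal is x if b = True and the negation of x if b = False.
  A clause is a finite set of literals on distinct variables.\<close>
type_synonym 'v lit = "'v \<times> bool"

definition vbl :: "'v lit set \<Rightarrow> 'v set" where
  "vbl c = fst ` c"

definition cnf_formula :: "'v set \<Rightarrow> 'v lit set set \<Rightarrow> bool" where
  "cnf_formula V C \<longleftrightarrow> finite V \<and> finite C \<and>
     (\<forall>c\<in>C. finite c \<and> vbl c \<subseteq> V \<and> inj_on fst c)"

definition clause_sat :: "('v \<Rightarrow> bool) \<Rightarrow> 'v lit set \<Rightarrow> bool" where
  "clause_sat \<sigma> c \<longleftrightarrow> (\<exists>(x, b)\<in>c. \<sigma> x = b)"

text \<open>Satisfying assignments V \<rightarrow> {False, True} (False = 0, True = 1), as extensional functions.\<close>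
definition sat_assignments :: "'v set \<Rightarrow> 'v lit set set \<Rightarrow> ('v \<Rightarrow> bool) set" where
  "sat_assignments V C = {\<sigma> \<in> V \<rightarrow>\<^sub>E (UNIV :: bool set). \<forall>c\<in>C. clause_sat \<sigma> c}"

definition uniform_sat :: "'v set \<Rightarrow> 'v lit set set \<Rightarrow> ('v \<Rightarrow> bool) pmf" where
  "uniform_sat V C = pmf_of_set (sat_assignments V C)"

end

theory Submission
  imports Defs
begin

lemma prod_card:
  fixes V U :: "'v set" and E F :: "('v \<Rightarrow> bool) \<Rightarrow> bool"
  assumes "finite V" "U \<subseteq> V"
   and dE: "\<And>\<sigma> \<tau>. (\<forall>x\<in>U. \<sigma> x = \<tau> x) \<Longrightarrow> E \<sigma> = E \<tau>"
   and dF: "\<And>\<sigma> \<tau>. (\<forall>x\<in>V-U. \<sigma> x = \<tau> x) \<Longrightarrow> F \<sigma> = F \<tau>"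
  shows "card {\<sigma> \<in> V \<rightarrow>\<^sub>E (UNIV::bool set). E \<sigma> \<and> F \<sigma>}
     = card {\<tau> \<in> U \<rightarrow>\<^sub>E (UNIV::bool set). E \<tau>} * card {\<tau> \<in> (V-U) \<rightarrow>\<^sub>E (UNIV::bool set). F \<tau>}"
proof -
  let ?f = "\<lambda>\<sigma>. (restrict \<sigma> U, restrict \<sigma> (V-U))"
  have "bij_betw ?f {\<sigma> \<in> V \<rightarrow>\<^sub>E (UNIV::bool set). E \<sigma> \<and> F \<sigma>}
     ({\<tau> \<in> U \<rightarrow>\<^sub>E (UNIV::bool set). E \<tau>} \<times> {\<tau> \<in> (V-U) \<rightarrow>\<^sub>E (UNIV::bool set). F \<tau>})"
  proof (rule bij_betwI')
    fix \<sigma> \<sigma>' assume s: "\<sigma> \<in> {\<sigma> \<in> V \<rightarrow>\<^sub>E (UNIV::bool set). E \<sigma> \<and> F \<sigma>}"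
      and s': "\<sigma>' \<in> {\<sigma> \<in> V \<rightarrow>\<^sub>E (UNIV::bool set). E \<sigma> \<and> F \<sigma>}"
    show "(?f \<sigma> = ?f \<sigma>') = (\<sigma> = \<sigma>')"
    proof
      assume h: "?f \<sigma> = ?f \<sigma>'"
      then have h1: "restrict \<sigma> U = restrict \<sigma>' U" and h2: "restrict \<sigma> (V-U) = restrict \<sigma>' (V-U)"
        by simp_all
      show "\<sigma> = \<sigma>'"
      proof
        fix x
        show "\<sigma> x = \<sigma>' x"
        proof (cases "x \<in> V")
          case True
          show ?thesis
          proof (cases "x \<in> U")
            case True
            then show ?thesis using fun_cong[OF h1, of x] by simp
          next
            case False
            then have "x \<in> V - U" using \<open>x \<in> V\<close> by blast
            then show ?thesis using fun_cong[OF h2, of x] by simp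
          qed
        next
          case False
          have "\<sigma> \<in> V \<rightarrow>\<^sub>E (UNIV::bool set)" "\<sigma>' \<in> V \<rightarrow>\<^sub>E (UNIV::bool set)" using s s' by simp_all
          then show ?thesis using False PiE_arb by metis
        qed
      qed
    qed simp
  next
    fix \<sigma> assume s: "\<sigma> \<in> {\<sigma> \<in> V \<rightarrow>\<^sub>E (UNIV::bool set). E \<sigma> \<and> F \<sigma>}"
    have "E (restrict \<sigma> U)" using s dE[of "restrict \<sigma> U" \<sigma>] by simp
    moreover have "F (restrict \<sigma> (V-U))" using s dF[of "restrict \<sigma> (V-U)" \<sigma>] by simp
    ultimately show "?f \<sigma> \<in> {\<tau> \<in> U \<rightarrow>\<^sub>E (UNIV::bool set). E \<tau>} \<times> {\<tau> \<in> (V-U) \<rightarrow>\<^sub>E (UNIV::bool set). F \<tau>}"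
      by simp
  next
    fix p assume p: "p \<in> {\<tau> \<in> U \<rightarrow>\<^sub>E (UNIV::bool set). E \<tau>} \<times> {\<tau> \<in> (V-U) \<rightarrow>\<^sub>E (UNIV::bool set). F \<tau>}"
    obtain a b where ab: "p = (a, b)" by force
    define \<sigma> where "\<sigma> = (\<lambda>x. if x \<in> U then a x else b x)"
    have a: "a \<in> U \<rightarrow>\<^sub>E UNIV" "E a" and b: "b \<in> (V-U) \<rightarrow>\<^sub>E UNIV" "F b" using p ab by auto
    have "\<sigma> \<in> V \<rightarrow>\<^sub>E UNIV"
    proof -
      have "\<sigma> x = undefined" if "x \<notin> V" for x
      proof -
        have "x \<notin> U" "x \<notin> V - U" using that assms(2) by auto
        then show ?thesis using PiE_arb[OF b(1)] unfolding \<sigma>_def by simp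
      qed
      then show ?thesis by (simp add: PiE_iff extensional_def)
    qed
    moreover have "E \<sigma>" using dE[of \<sigma> a] a(2) unfolding \<sigma>_def by simp
    moreover have "F \<sigma>" using dF[of \<sigma> b] b(2) unfolding \<sigma>_def by simp
    moreover have "restrict \<sigma> U = a"
    proof
      fix x show "restrict \<sigma> U x = a x"
        using PiE_arb[OF a(1), of x] unfolding \<sigma>_def by (cases "x \<in> U") simp_all
    qed
    moreover have "restrict \<sigma> (V-U) = b"
    proof
      fix x show "restrict \<sigma> (V-U) x = b x"
        using PiE_arb[OF b(1), of x] unfolding \<sigma>_def by (cases "x \<in> V - U") simp_all
    qed
    ultimately show "\<exists>\<sigma>\<in>{\<sigma> \<in> V \<rightarrow>\<^sub>E (UNIV::bool set). E \<sigma> \<and> F \<sigma>}. p = ?f \<sigma>"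
      using ab by blast
  qed
  then show ?thesis by (simp add: bij_betw_same_card card_cartesian_product)
qed

lemma card_PiE_bool: "finite U \<Longrightarrow> card (U \<rightarrow>\<^sub>E (UNIV::bool set)) = 2 ^ card U"
  by (simp add: card_PiE)

lemma indep_le:
  fixes V U :: "'v set" and E F :: "('v \<Rightarrow> bool) \<Rightarrow> bool"
  assumes "finite V" "U \<subseteq> V"
   and dE: "\<And>\<sigma> \<tau>. (\<forall>x\<in>U. \<sigma> x = \<tau> x) \<Longrightarrow> E \<sigma> = E \<tau>"
   and dF: "\<And>\<sigma> \<tau>. (\<forall>x\<in>V-U. \<sigma> x = \<tau> x) \<Longrightarrow> F \<sigma> = F \<tau>"
   and one: "card {\<tau> \<in> U \<rightarrow>\<^sub>E (UNIV::bool set). E \<tau>} \<le> 1"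
  shows "card {\<sigma> \<in> V \<rightarrow>\<^sub>E (UNIV::bool set). E \<sigma> \<and> F \<sigma>} * 2 ^ card U
     \<le> card {\<sigma> \<in> V \<rightarrow>\<^sub>E (UNIV::bool set). F \<sigma>}"
proof -
  have fU: "finite U" using assms(1,2) finite_subset by blast
  have 1: "card {\<sigma> \<in> V \<rightarrow>\<^sub>E (UNIV::bool set). True \<and> F \<sigma>}
     = card {\<tau> \<in> U \<rightarrow>\<^sub>E (UNIV::bool set). True} * card {\<tau> \<in> (V-U) \<rightarrow>\<^sub>E (UNIV::bool set). F \<tau>}"
    by (rule prod_card[OF assms(1,2)]) (simp, rule dF, assumption)
  have 2: "card {\<tau> \<in> U \<rightarrow>\<^sub>E (UNIV::bool set). True} = 2 ^ card U"
    using card_PiE_bool[OF fU] by simp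
  have 3: "card {\<sigma> \<in> V \<rightarrow>\<^sub>E (UNIV::bool set). E \<sigma> \<and> F \<sigma>}
     = card {\<tau> \<in> U \<rightarrow>\<^sub>E (UNIV::bool set). E \<tau>} * card {\<tau> \<in> (V-U) \<rightarrow>\<^sub>E (UNIV::bool set). F \<tau>}"
    by (rule prod_card[OF assms(1,2) dE dF])
  have 4: "card {\<tau> \<in> U \<rightarrow>\<^sub>E (UNIV::bool set). E \<tau>} * card {\<tau> \<in> (V-U) \<rightarrow>\<^sub>E (UNIV::bool set). F \<tau>} * 2 ^ card U
     \<le> 1 * card {\<tau> \<in> (V-U) \<rightarrow>\<^sub>E (UNIV::bool set). F \<tau>} * 2 ^ card U"
    using one by (intro mult_le_mono1)
  show ?thesis
    using 1 2 3 4 by (simp add: mult.commute)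
qed

lemma falsifier_unique:
  fixes c :: "'v lit set"
  assumes "finite (vbl c)"
  shows "card {\<tau> \<in> vbl c \<rightarrow>\<^sub>E (UNIV::bool set). \<not> clause_sat \<tau> c} \<le> 1"
proof -
  let ?A = "{\<tau> \<in> vbl c \<rightarrow>\<^sub>E (UNIV::bool set). \<not> clause_sat \<tau> c}"
  have eq: "a1 = a2" if h1: "a1 \<in> ?A" and h2: "a2 \<in> ?A" for a1 a2
  proof
    fix x show "a1 x = a2 x"
    proof (cases "x \<in> vbl c")
      case True
      then obtain p where p: "p \<in> c" "x = fst p" unfolding vbl_def by blast
      then have xb: "(x, snd p) \<in> c" by simp
      have "\<not> clause_sat a1 c" "\<not> clause_sat a2 c" using h1 h2 by simp_all
      then have "a1 x \<noteq> snd p" "a2 x \<noteq> snd p" using xb unfolding clause_sat_def by blast+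
      then show ?thesis by (cases "snd p") simp_all
    next
      case False
      have "a1 \<in> vbl c \<rightarrow>\<^sub>E (UNIV::bool set)" "a2 \<in> vbl c \<rightarrow>\<^sub>E (UNIV::bool set)" using h1 h2 by simp_all
      then show ?thesis using False PiE_arb by metis
    qed
  qed
  have fin: "finite ?A"
    by (rule finite_subset[of _ "vbl c \<rightarrow>\<^sub>E (UNIV::bool set)"]) (auto intro: finite_PiE assms)
  show ?thesis using card_le_Suc0_iff_eq[OF fin] eq by auto
qed

lemma point_unique:
  shows "card {\<tau> \<in> {v} \<rightarrow>\<^sub>E (UNIV::bool set). \<tau> v = b} \<le> 1"
proof -
  let ?A = "{\<tau> \<in> {v} \<rightarrow>\<^sub>E (UNIV::bool set). \<tau> v = b}"
  have eq: "a1 = a2" if h1: "a1 \<in> ?A" and h2: "a2 \<in> ?A" for a1 a2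
  proof
    fix x show "a1 x = a2 x"
    proof (cases "x = v")
      case True
      then show ?thesis using h1 h2 by simp
    next
      case False
      have "a1 \<in> {v} \<rightarrow>\<^sub>E (UNIV::bool set)" "a2 \<in> {v} \<rightarrow>\<^sub>E (UNIV::bool set)" using h1 h2 by simp_all
      then show ?thesis using False PiE_arb by (metis singletonD)
    qed
  qed
  have fin: "finite ?A"
    by (rule finite_subset[of _ "{v} \<rightarrow>\<^sub>E (UNIV::bool set)"]) (auto intro: finite_PiE)
  show ?thesis using card_le_Suc0_iff_eq[OF fin] eq by auto
qed

lemma clause_sat_dep:
  assumes "\<forall>x\<in>vbl c. \<sigma> x = \<tau> x"
  shows "clause_sat \<sigma> c = clause_sat \<tau> c"
proof -
  have e: "\<sigma> (fst p) = \<tau> (fst p)" if "p \<in> c" for p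
  proof -
    have "fst p \<in> vbl c" using that unfolding vbl_def by (rule imageI)
    then show ?thesis using assms by blast
  qed
  have "clause_sat \<sigma> c = (\<exists>p\<in>c. \<sigma> (fst p) = snd p)" unfolding clause_sat_def by (simp add: case_prod_beta)
  also have "\<dots> = (\<exists>p\<in>c. \<tau> (fst p) = snd p)" using e by (intro bex_cong) simp_all
  also have "\<dots> = clause_sat \<tau> c" unfolding clause_sat_def by (simp add: case_prod_beta)
  finally show ?thesis .
qed

definition Nset :: "'v set \<Rightarrow> 'v lit set set \<Rightarrow> ('v \<Rightarrow> bool) set" where
  "Nset V S = {\<sigma> \<in> V \<rightarrow>\<^sub>E (UNIV::bool set). \<forall>c\<in>S. clause_sat \<sigma> c}"

lemma chain:
  assumes fin: "finite R" and x: "x \<le> 1"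
   and step: "\<And>T c'. T \<subseteq> A \<Longrightarrow> c' \<in> A \<Longrightarrow> c' \<notin> T \<Longrightarrow>
        (1-x) * real (card (Nset V T)) \<le> real (card (Nset V (insert c' T)))"
  shows "T0 \<union> R \<subseteq> A \<Longrightarrow> T0 \<inter> R = {} \<Longrightarrow>
     (1-x)^card R * real (card (Nset V T0)) \<le> real (card (Nset V (T0 \<union> R)))"
  using fin
proof (induction R rule: finite_induct)
  case empty then show ?case by simp
next
  case (insert c' R)
  have "(1-x)^card (insert c' R) * card (Nset V T0) = (1-x) * ((1-x)^card R * card (Nset V T0))"
    using insert by simp
  also have "\<dots> \<le> (1-x) * card (Nset V (T0 \<union> R))"
    using insert x by (intro mult_left_mono) auto
  also have "\<dots> \<le> card (Nset V (insert c' (T0 \<union> R)))"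
    using insert by (intro step) auto
  finally show ?case by simp
qed

lemma lll_step:
  assumes cnf: "cnf_formula V C" and x: "0 \<le> x" "x \<le> 1"
   and nb: "\<And>c. c \<in> C \<Longrightarrow> card {c'\<in>C. c' \<noteq> c \<and> vbl c' \<inter> vbl c \<noteq> {}} \<le> m"
   and pr: "\<And>c. c \<in> C \<Longrightarrow> 1 / 2 ^ card (vbl c) \<le> x * (1-x)^m"
  shows "card S = n \<Longrightarrow> S \<subseteq> C \<Longrightarrow> c \<in> C \<Longrightarrow> c \<notin> S \<Longrightarrow>
     (1-x) * real (card (Nset V S)) \<le> real (card (Nset V (insert c S)))"
proof (induction n arbitrary: S c rule: less_induct)
  case (less n S c)
  have finC: "finite C" "finite V" using cnf unfolding cnf_formula_def by auto
  have finS: "finite S" using less.prems finC finite_subset by blast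
  have cprops: "finite c" "vbl c \<subseteq> V" using cnf less.prems(3) unfolding cnf_formula_def by auto
  have Cvbl: "\<And>c'. c' \<in> C \<Longrightarrow> vbl c' \<subseteq> V" using cnf unfolding cnf_formula_def by auto
  define S1 where "S1 = {c'\<in>S. vbl c' \<inter> vbl c \<noteq> {}}"
  define S2 where "S2 = S - S1"
  have IH: "(1-x) * real (card (Nset V T)) \<le> real (card (Nset V (insert c' T)))"
    if "T \<subseteq> S" "c' \<in> S" "c' \<notin> T" for T c'
  proof -
    from that have "T \<subset> S" by blast
    then have "card T < n" using less.prems(1) finS psubset_card_mono by blast
    then show ?thesis using less.IH[of "card T" T c'] that less.prems by blast
  qed
  have ch: "(1-x)^card S1 * real (card (Nset V S2)) \<le> real (card (Nset V (S2 \<union> S1)))"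
    by (rule chain[where A=S, OF _ x(2) IH]) (auto simp: S1_def S2_def finS)
  have S_eq: "S2 \<union> S1 = S" by (auto simp: S1_def S2_def)
  have S1m: "card S1 \<le> m"
  proof -
    have "S1 \<subseteq> {c'\<in>C. c' \<noteq> c \<and> vbl c' \<inter> vbl c \<noteq> {}}" using less.prems by (auto simp: S1_def)
    then have "card S1 \<le> card {c'\<in>C. c' \<noteq> c \<and> vbl c' \<inter> vbl c \<noteq> {}}"
      using finC by (intro card_mono) auto
    then show ?thesis using nb[OF less.prems(3)] by linarith
  qed
  let ?bad = "{\<sigma> \<in> V \<rightarrow>\<^sub>E (UNIV::bool set). \<not> clause_sat \<sigma> c \<and> (\<forall>c'\<in>S2. clause_sat \<sigma> c')}"
  have ind: "card ?bad * 2 ^ card (vbl c) \<le> card {\<sigma> \<in> V \<rightarrow>\<^sub>E (UNIV::bool set). \<forall>c'\<in>S2. clause_sat \<sigma> c'}"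
  proof (rule indep_le[OF finC(2) cprops(2)])
    fix \<sigma> \<tau> :: "'a \<Rightarrow> bool" assume "\<forall>x\<in>vbl c. \<sigma> x = \<tau> x"
    then show "(\<not> clause_sat \<sigma> c) = (\<not> clause_sat \<tau> c)" using clause_sat_dep by metis
  next
    fix \<sigma> \<tau> :: "'a \<Rightarrow> bool" assume h: "\<forall>x\<in>V - vbl c. \<sigma> x = \<tau> x"
    have "clause_sat \<sigma> c' = clause_sat \<tau> c'" if "c' \<in> S2" for c'
    proof (rule clause_sat_dep)
      have "vbl c' \<subseteq> V - vbl c" using that Cvbl less.prems(2) by (auto simp: S2_def S1_def)
      then show "\<forall>x\<in>vbl c'. \<sigma> x = \<tau> x" using h by blast
    qed
    then show "(\<forall>c'\<in>S2. clause_sat \<sigma> c') = (\<forall>c'\<in>S2. clause_sat \<tau> c')" by blast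
  next
    show "card {\<tau> \<in> vbl c \<rightarrow>\<^sub>E UNIV. \<not> clause_sat \<tau> c} \<le> 1"
      by (rule falsifier_unique) (simp add: vbl_def cprops(1))
  qed
  have finPi: "finite (V \<rightarrow>\<^sub>E (UNIV::bool set))" using finC by (simp add: finite_PiE)
  have split: "card (Nset V S) = card (Nset V (insert c S)) + card {\<sigma> \<in> Nset V S. \<not> clause_sat \<sigma> c}"
  proof -
    have "Nset V S = Nset V (insert c S) \<union> {\<sigma> \<in> Nset V S. \<not> clause_sat \<sigma> c}"
      "Nset V (insert c S) \<inter> {\<sigma> \<in> Nset V S. \<not> clause_sat \<sigma> c} = {}"
      by (auto simp: Nset_def)
    moreover have "finite (Nset V S)" using finPi by (simp add: Nset_def)
    ultimately show ?thesis by (metis card_Un_disjoint finite_Un)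
  qed
  have bad_le: "card {\<sigma> \<in> Nset V S. \<not> clause_sat \<sigma> c} \<le> card ?bad"
    by (rule card_mono) (use finPi in \<open>auto simp: Nset_def S2_def\<close>)
  define B where "B = real (card ?bad)"
  define N2 where "N2 = real (card (Nset V S2))"
  define NS where "NS = real (card (Nset V S))"
  define w where "w = card (vbl c)"
  have "B * 2 ^ w \<le> N2" unfolding B_def N2_def w_def Nset_def
    using ind by (metis (mono_tags, lifting) of_nat_le_iff of_nat_mult of_nat_numeral of_nat_power)
  then have "B \<le> N2 * (1 / 2 ^ w)" by (simp add: field_simps)
  also have "\<dots> \<le> N2 * (x * (1-x)^m)"
    using pr[OF less.prems(3)] unfolding w_def N2_def by (intro mult_left_mono) auto
  also have "\<dots> \<le> N2 * (x * (1-x)^card S1)"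
    using S1m x unfolding N2_def by (intro mult_left_mono power_decreasing) auto
  also have "\<dots> = x * ((1-x)^card S1 * N2)" by simp
  also have "\<dots> \<le> x * NS" using ch S_eq x unfolding N2_def NS_def by (intro mult_left_mono) auto
  finally have "B \<le> x * NS" .
  then show ?case using split bad_le unfolding B_def NS_def
    by (simp add: algebra_simps)
qed

lemma num_pr:
  fixes d kk kt w m :: nat and s x :: real
  assumes d: "1 \<le> d" and s: "1 \<le> s" "real kt \<le> s" and k: "2 ^ kk \<ge> 2 * exp 1 * real d * s"
    and w: "kk \<le> w" and xd: "x = 1 / (2 * real d * s)" and md: "m = kt * (d - 1)"
  shows "1 / 2 ^ w \<le> x * (1 - x) ^ m"
proof -
  have ds: "real d * s \<ge> 1" using mult_mono[of 1 "real d" 1 s] d s by simp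
  have x0: "0 < x" "x \<le> 1/2" using ds unfolding xd by (auto simp: field_simps)
  have e2: "exp (1::real) \<ge> 2" using exp_ge_add_one_self[of "1::real"] by simp
  have "4 * (real d * s) \<le> 2 * exp 1 * (real d * s)" using e2 ds by (intro mult_right_mono) auto
  moreover have "2 * exp 1 * real d * s = 2 * exp 1 * (real d * s)" by simp
  ultimately have k4: "4 * (real d * s) \<le> 2 ^ kk" using k by linarith
  have "(2::real) ^ kk \<le> 2 ^ w" using w by (intro power_increasing) auto
  then have "1 / (2::real) ^ w \<le> 1 / 2 ^ kk" by (intro divide_left_mono) auto
  also have "\<dots> \<le> 1 / (4 * (real d * s))" using k4 ds by (intro divide_left_mono) auto
  also have "\<dots> = x / 2" unfolding xd by (simp add: field_simps)
  also have "\<dots> \<le> x * (1 - x) ^ m"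
  proof -
    have "real m \<le> s * real d"
    proof -
      have "real m = real kt * real (d - 1)" unfolding md by simp
      also have "\<dots> \<le> s * real d" using s d by (intro mult_mono) auto
      finally show ?thesis .
    qed
    then have "real m * x \<le> 1/2" unfolding xd using ds by (simp add: field_simps)
    moreover have "1 + real m * (- x) \<le> (1 + (- x)) ^ m"
      by (rule Bernoulli_inequality) (use x0 in auto)
    ultimately have "1/2 \<le> (1 - x) ^ m" by simp
    then show ?thesis using x0 by (simp add: field_simps)
  qed
  finally show ?thesis .
qed

lemma num_exp:
  fixes d :: nat and s x :: real
  assumes d: "1 \<le> d" and s: "1 \<le> s" and xd: "x = 1 / (2 * real d * s)"
  shows "exp (- 1 / s) \<le> (1 - x) ^ d"
proof -
  have ds: "real d * s \<ge> 1" using mult_mono[of 1 "real d" 1 s] d s by simp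
  have x0: "0 < x" "x \<le> 1/2" using ds unfolding xd by (auto simp: field_simps)
  have "1 + 2 * x \<le> exp (2 * x)" by (rule exp_ge_add_one_self)
  moreover have "1 \<le> (1 - x) * (1 + 2 * x)"
  proof -
    have "0 \<le> x * (1 - 2*x)" using x0 by (intro mult_nonneg_nonneg) auto
    moreover have "(1-x)*(1+2*x) = 1 + x*(1-2*x)" by (simp add: algebra_simps)
    ultimately show ?thesis by linarith
  qed
  moreover have "(1 - x) * (1 + 2 * x) \<le> (1 - x) * exp (2 * x)"
    using x0 \<open>1 + 2 * x \<le> exp (2 * x)\<close> by (intro mult_left_mono) auto
  ultimately have "1 \<le> (1 - x) * exp (2 * x)" by linarith
  then have "exp (- (2 * x)) \<le> 1 - x" by (simp add: exp_minus field_simps)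
  then have "exp (- (2 * x)) ^ d \<le> (1 - x) ^ d" by (intro power_mono) auto
  moreover have "exp (- (2 * x)) ^ d = exp (- 1 / s)"
    unfolding exp_of_nat_mult[symmetric] xd using d s by (simp add: field_simps)
  ultimately show ?thesis by simp
qed

theorem corollary2p2:
  fixes V :: "'v set" and C :: "'v lit set set"
    and k1 k2 d :: nat and s :: real
  assumes "cnf_formula V C"
    and "1 \<le> k1"
    and "\<forall>c\<in>C. k1 \<le> card (vbl c) \<and> card (vbl c) \<le> k2"
    and "\<forall>v\<in>V. card {c \<in> C. v \<in> vbl c} \<le> d"
    and "s \<ge> real k2"
    and "2 ^ k1 \<ge> 2 * exp 1 * real d * s"
  shows "sat_assignments V C \<noteq> {} \<and>
    (\<forall>v\<in>V. max (measure_pmf.prob (uniform_sat V C) {X. X v = False})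
                 (measure_pmf.prob (uniform_sat V C) {X. X v = True})
             \<le> 1 / 2 * exp (1 / s))"
proof -
  note cnf = assms(1)
  have finV: "finite V" and finC: "finite C" using cnf unfolding cnf_formula_def by auto
  have Cvbl: "\<And>c. c \<in> C \<Longrightarrow> vbl c \<subseteq> V \<and> finite (vbl c)"
    using cnf unfolding cnf_formula_def vbl_def by auto
  have s0: "0 \<le> s" using assms(5) by (meson of_nat_0_le_iff order_trans)
  have Cne: "1 \<le> d \<and> 1 \<le> s" if neC: "C \<noteq> {}"
  proof -
    obtain c where c: "c \<in> C" using neC by blast
    then have "1 \<le> card (vbl c)" using assms(2,3) by auto
    then obtain v where v: "v \<in> vbl c" by (metis card.empty ex_in_conv not_one_le_zero)
    have vV: "v \<in> V" using v Cvbl[OF c] by blast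
    have "c \<in> {c \<in> C. v \<in> vbl c}" using c v by blast
    then have "1 \<le> card {c \<in> C. v \<in> vbl c}" using finC
      by (metis (no_types, lifting) One_nat_def Suc_leI card_gt_0_iff empty_iff finite_subset mem_Collect_eq subsetI)
    then have "1 \<le> d" using assms(4) vV by (meson order_trans)
    moreover have "1 \<le> real k2" using \<open>1 \<le> card (vbl c)\<close> assms(3) c by auto
    ultimately show ?thesis using assms(5) by auto
  qed
  define x where "x = (if C = {} then 0 else 1 / (2 * real d * s))"
  define m where "m = k2 * (d - 1)"
  have x01: "0 \<le> x" "x \<le> 1/2"
  proof -
    show "0 \<le> x" unfolding x_def using s0 by auto
    show "x \<le> 1/2"
    proof (cases "C = {}")
      case False
      then have "1 \<le> d" "1 \<le> s" using Cne by auto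
      then have "real d * s \<ge> 1" using mult_mono[of 1 "real d" 1 s] by simp
      then show ?thesis using False unfolding x_def by (auto simp: field_simps)
    qed (simp add: x_def)
  qed
  have nb: "card {c'\<in>C. c' \<noteq> c \<and> vbl c' \<inter> vbl c \<noteq> {}} \<le> m" if c: "c \<in> C" for c
  proof -
    have "{c'\<in>C. c' \<noteq> c \<and> vbl c' \<inter> vbl c \<noteq> {}} \<subseteq> (\<Union>v\<in>vbl c. {c'\<in>C. v \<in> vbl c'} - {c})"
      by blast
    then have "card {c'\<in>C. c' \<noteq> c \<and> vbl c' \<inter> vbl c \<noteq> {}} \<le> card (\<Union>v\<in>vbl c. {c'\<in>C. v \<in> vbl c'} - {c})"
      using finC Cvbl[OF c] by (intro card_mono) auto
    also have "\<dots> \<le> (\<Sum>v\<in>vbl c. card ({c'\<in>C. v \<in> vbl c'} - {c}))"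
      using Cvbl[OF c] by (intro card_UN_le) auto
    also have "\<dots> \<le> (\<Sum>v\<in>vbl c. d - 1)"
    proof (rule sum_mono)
      fix v assume v: "v \<in> vbl c"
      have "card ({c'\<in>C. v \<in> vbl c'} - {c}) = card {c'\<in>C. v \<in> vbl c'} - 1"
        using v c finC by (subst card_Diff_singleton) auto
      moreover have "card {c'\<in>C. v \<in> vbl c'} \<le> d" using assms(4) v Cvbl[OF c] by blast
      ultimately show "card ({c'\<in>C. v \<in> vbl c'} - {c}) \<le> d - 1" by linarith
    qed
    also have "\<dots> = card (vbl c) * (d - 1)" by simp
    also have "\<dots> \<le> m" unfolding m_def using assms(3) c by (intro mult_le_mono1) auto
    finally show ?thesis .
  qed
  have pr: "1 / 2 ^ card (vbl c) \<le> x * (1 - x) ^ m" if c: "c \<in> C" for c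
  proof -
    have ne: "C \<noteq> {}" using c by blast
    show ?thesis
      by (rule num_pr[where kk=k1 and kt=k2 and d=d and s=s])
         (use Cne[OF ne] assms(3,5,6) c ne in \<open>auto simp: x_def m_def\<close>)
  qed
  have step: "(1-x) * real (card (Nset V T)) \<le> real (card (Nset V (insert c' T)))"
    if "T \<subseteq> C" "c' \<in> C" "c' \<notin> T" for T c'
    using lll_step[OF cnf x01(1) _ nb pr, where n="card T" and S=T and c=c'] x01 that by auto
  have sat_eq: "sat_assignments V C = Nset V C" by (simp add: sat_assignments_def Nset_def)
  have finPi: "finite (V \<rightarrow>\<^sub>E (UNIV::bool set))" using finV by (simp add: finite_PiE)
  have finN: "finite (Nset V C)" using finPi by (simp add: Nset_def)
  have NCpos: "0 < card (Nset V C)"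
  proof -
    have "(1-x)^card C * real (card (Nset V {})) \<le> real (card (Nset V ({} \<union> C)))"
      by (rule chain[where A=C, OF finC _ step]) (use x01 in auto)
    moreover have "card (Nset V {}) = 2 ^ card V" using card_PiE_bool[OF finV] by (simp add: Nset_def)
    moreover have "0 < (1-x)^card C" using x01 by simp
    ultimately have "0 < real (card (Nset V C))"
      by (smt (verit) Un_empty_left mult_pos_pos of_nat_0_less_iff zero_less_numeral zero_less_power)
    then show ?thesis by simp
  qed
  have key: "exp (- 1 / s) \<le> (1 - x) ^ d"
  proof (cases "C = {}")
    case True
    then show ?thesis using s0 by (simp add: x_def)
  next
    case False
    then show ?thesis using Cne[OF False] num_exp[of d s x] by (simp add: x_def)
  qed
  have marg: "measure_pmf.prob (uniform_sat V C) {X. X v = b} \<le> 1 / 2 * exp (1 / s)"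
    if v: "v \<in> V" for v b
  proof -
    define C1 where "C1 = {c\<in>C. v \<in> vbl c}"
    define C2 where "C2 = C - C1"
    let ?bad = "{\<sigma> \<in> V \<rightarrow>\<^sub>E (UNIV::bool set). \<sigma> v = b \<and> (\<forall>c'\<in>C2. clause_sat \<sigma> c')}"
    have ind: "card ?bad * 2 ^ card {v} \<le> card {\<sigma> \<in> V \<rightarrow>\<^sub>E (UNIV::bool set). \<forall>c'\<in>C2. clause_sat \<sigma> c'}"
    proof (rule indep_le[OF finV])
      show "{v} \<subseteq> V" using v by simp
    next
      fix \<sigma> \<tau> :: "'v \<Rightarrow> bool" assume "\<forall>x\<in>{v}. \<sigma> x = \<tau> x"
      then show "(\<sigma> v = b) = (\<tau> v = b)" by simp
    next
      fix \<sigma> \<tau> :: "'v \<Rightarrow> bool" assume h: "\<forall>x\<in>V - {v}. \<sigma> x = \<tau> x"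
      have "clause_sat \<sigma> c' = clause_sat \<tau> c'" if "c' \<in> C2" for c'
      proof (rule clause_sat_dep)
        have "vbl c' \<subseteq> V - {v}" using that Cvbl by (auto simp: C2_def C1_def)
        then show "\<forall>x\<in>vbl c'. \<sigma> x = \<tau> x" using h by blast
      qed
      then show "(\<forall>c'\<in>C2. clause_sat \<sigma> c') = (\<forall>c'\<in>C2. clause_sat \<tau> c')" by blast
    next
      show "card {\<tau> \<in> {v} \<rightarrow>\<^sub>E UNIV. \<tau> v = b} \<le> 1" by (rule point_unique)
    qed
    have bad_le: "card (Nset V C \<inter> {X. X v = b}) \<le> card ?bad"
      by (rule card_mono) (use finPi in \<open>auto simp: Nset_def C2_def\<close>)
    have ch: "(1-x)^card C1 * real (card (Nset V C2)) \<le> real (card (Nset V (C2 \<union> C1)))"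
      by (rule chain[where A=C, OF _ _ step]) (use x01 finC in \<open>auto simp: C1_def C2_def\<close>)
    have C_eq: "C2 \<union> C1 = C" by (auto simp: C1_def C2_def)
    have C1d: "card C1 \<le> d" using assms(4) v by (simp add: C1_def)
    define Bv where "Bv = real (card (Nset V C \<inter> {X. X v = b}))"
    define N2 where "N2 = real (card (Nset V C2))"
    define NC where "NC = real (card (Nset V C))"
    have NCne: "Nset V C \<noteq> {}" using NCpos by auto
    have NC0: "0 < NC" using NCpos unfolding NC_def by simp
    have c1: "card {v} = 1" by simp
    have "card ?bad * 2 \<le> card (Nset V C2)" using ind unfolding c1 by (simp add: Nset_def)
    then have "real (card ?bad * 2) \<le> real (card (Nset V C2))" by (rule of_nat_mono)
    then have r1: "real (card ?bad) * 2 \<le> N2" unfolding N2_def by simp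
    have r2: "Bv \<le> real (card ?bad)" using bad_le unfolding Bv_def by simp
    have B2: "Bv * 2 \<le> N2" using r1 r2 by linarith
    have N2le: "N2 * (1-x)^d \<le> NC"
    proof -
      have "N2 * (1-x)^d \<le> N2 * (1-x)^card C1"
        using C1d x01 unfolding N2_def by (intro mult_left_mono power_decreasing) auto
      also have "\<dots> \<le> NC" using ch C_eq unfolding N2_def NC_def by (simp add: mult.commute)
      finally show ?thesis .
    qed
    have e1: "exp (1/s) * exp (- 1 / s) = 1"
      by (simp add: exp_add[symmetric])
    have N20: "0 \<le> N2" unfolding N2_def by simp
    have "N2 = exp (1/s) * (N2 * exp (- 1 / s))" using e1 by (simp add: algebra_simps)
    also have "\<dots> \<le> exp (1/s) * (N2 * (1-x)^d)"
      by (intro mult_left_mono key N20) simp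
    also have "\<dots> \<le> exp (1/s) * NC" using N2le by simp
    finally have "Bv * 2 \<le> exp (1/s) * NC" using B2 by linarith
    then have "Bv / NC \<le> 1 / 2 * exp (1 / s)" using NC0 by (simp add: field_simps)
    moreover have "measure_pmf.prob (uniform_sat V C) {X. X v = b} = Bv / NC"
      unfolding uniform_sat_def sat_eq Bv_def NC_def
      using measure_pmf_of_set[of "Nset V C" "{X. X v = b}"] finN NCne by simp
    ultimately show ?thesis by simp
  qed
  show ?thesis
  proof (intro conjI ballI)
    show "sat_assignments V C \<noteq> {}" using NCpos sat_eq by (metis card.empty less_irrefl)
  next
    fix v assume v: "v \<in> V"
    show "max (measure_pmf.prob (uniform_sat V C) {X. X v = False})
               (measure_pmf.prob (uniform_sat V C) {X. X v = True}) \<le> 1 / 2 * exp (1 / s)"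
      by (rule max.boundedI[OF marg[OF v] marg[OF v]])
  qed
qed

end
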